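(* Let $G_4=K_{3,3}$, drawn as a regular hexagon with vertices $u_1,\dots,u_6$ in cyclic order, whose edges are the six sides $u_iu_{i+1}$ (indices mod 6) and the three long diagonals $u_1u_4,u_2u_5,u_3u_6$. Let the dihedral group $D_6$ of order $12$ (the symmetry group of the hexagon) act on edge labellings of $G_4$ via its action on the edges. For $s\ge0$ let $\widetilde{h}(s)$ be the number of magic distinct labellings of $G_4$ with magic sum $s$ counted up to this $D_6$-action (i.e. the number of $D_6$-orbits). Then $\widetilde{h}(s)$ is divisible by $6$ for every $s$.
   Context: A magic labelling of a finite graph is an assignment of nonnegative integer labels to its edges such that for every vertex the sum of the labels of the incident edges equals the same number $s$ (the magic sum). A magic distinct labelling is a magic labelling whose labels are pairwise distinct. *)

theory Defs
  imports Main
begin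

text \<open>Vertices u_1..u_6 of the hexagon are represented by 0..5 (u_(i+1) = i).
  Edges are two-element vertex sets.\<close>

definition G4_vertices :: "nat set" where
  "G4_vertices = {0..<6}"

definition G4_edges :: "nat set set" where
  "G4_edges = {{i, (i + 1) mod 6} | i. i < 6} \<union> {{i, i + 3} | i. i < 3}"

text \<open>An edge labelling is a function from edges to nonnegative integers;
  it is normalised to be 0 outside the edge set so that it is determined by its
  values on the edges.\<close>

definition is_labelling :: "(nat set \<Rightarrow> nat) \<Rightarrow> bool" where
  "is_labelling f \<longleftrightarrow> (\<forall>e. e \<notin> G4_edges \<longrightarrow> f e = 0)"

definition magic_with_sum :: "nat \<Rightarrow> (nat set \<Rightarrow> nat) \<Rightarrow> bool" where
  "magic_with_sum s f \<longleftrightarrow>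
     (\<forall>v\<in>G4_vertices. (\<Sum>e\<in>{e\<in>G4_edges. v \<in> e}. f e) = s)"

definition magic_distinct_labellings :: "nat \<Rightarrow> (nat set \<Rightarrow> nat) set" where
  "magic_distinct_labellings s =
     {f. is_labelling f \<and> magic_with_sum s f \<and> inj_on f G4_edges}"

definition D6 :: "(nat \<Rightarrow> nat) set" where
  "D6 = {(\<lambda>i. (k + i) mod 6) | k. k < 6} \<union> {(\<lambda>i. (k + 6 - i mod 6) mod 6) | k. k < 6}"

definition D6_orbit :: "(nat set \<Rightarrow> nat) \<Rightarrow> (nat set \<Rightarrow> nat) set" where
  "D6_orbit f = {f'. is_labelling f' \<and> (\<exists>g\<in>D6. \<forall>e\<in>G4_edges. f' (g ` e) = f e)}"

definition h_tilde :: "nat \<Rightarrow> nat" where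
  "h_tilde s = card (D6_orbit ` magic_distinct_labellings s)"

end

theory Submission
  imports Defs
begin

lemma all6: "(\<forall>k<(6::nat). P k) = (P 0 \<and> P 1 \<and> P 2 \<and> P 3 \<and> P 4 \<and> P 5)"
proof -
  have "{..<6::nat} = {0,1,2,3,4,5}" by auto
  then show ?thesis by (metis (no_types) lessThan_iff insert_iff empty_iff)
qed

lemma all3: "(\<forall>k<(3::nat). P k) = (P 0 \<and> P 1 \<and> P 2)"
proof -
  have "{..<3::nat} = {0,1,2}" by auto
  then show ?thesis by (metis (no_types) lessThan_iff insert_iff empty_iff)
qed

lemma odd_side: "\<forall>i<(6::nat). odd (i + (i + 1) mod 6)" by (simp only: all6) simp

lemma adj_cases: "\<forall>a<(6::nat). \<forall>b<6. odd (a+b) \<longrightarrow> b = (a+1) mod 6 \<or> a = (b+1) mod 6 \<or> (a<3 \<and> b = a+3) \<or> (b<3 \<and> a = b+3)"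
   by (simp only: all6) simp

lemma E_char: "G4_edges = {{a,b} | a b. a<6 \<and> b<6 \<and> odd(a+b)}"
proof (rule set_eqI, rule iffI)
  fix x assume "x \<in> G4_edges"
  then consider (s) i where "x = {i, (i + 1) mod 6}" "i < 6" | (d) i where "x = {i, i + 3}" "i < 3"
    unfolding G4_edges_def by blast
  then show "x \<in> {{a,b} | a b. a<6 \<and> b<6 \<and> odd(a+b)}"
  proof cases
    case s
    have "odd (i + (i + 1) mod 6)" using s(2) odd_side by blast
    moreover have "(i + 1) mod 6 < 6" by simp
    ultimately show ?thesis using s by blast
  next
    case d
    then have "odd (i + (i+3))" "i + 3 < 6" "i < 6" by auto
    then show ?thesis using d by blast
  qed
next
  fix x :: "nat set" assume "x \<in> {{a,b} | a b. a<6 \<and> b<6 \<and> odd(a+b)}"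
  then obtain a b :: nat where ab: "x = {a,b}" "a < 6" "b < 6" "odd (a+b)" by blast
  have "b = (a+1) mod 6 \<or> a = (b+1) mod 6 \<or> (a<3 \<and> b = a+3) \<or> (b<3 \<and> a = b+3)"
    using ab(2-4) adj_cases by blast
  then show "x \<in> G4_edges" unfolding G4_edges_def ab(1)
  proof (elim disjE)
    assume "b = (a+1) mod 6" then show "{a, b} \<in> {{i, (i + 1) mod 6} |i. i < 6} \<union> {{i, i + 3} |i. i < 3}"
      using ab(2) by blast
  next
    assume "a = (b+1) mod 6" then have "{a,b} = {b, (b+1) mod 6}" by auto
    then show "{a, b} \<in> {{i, (i + 1) mod 6} |i. i < 6} \<union> {{i, i + 3} |i. i < 3}"
      using ab(3) by blast
  next
    assume "a<3 \<and> b = a+3" then show "{a, b} \<in> {{i, (i + 1) mod 6} |i. i < 6} \<union> {{i, i + 3} |i. i < 3}"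
      by blast
  next
    assume "b<3 \<and> a = b+3" then have "{a,b} = {b, b+3}" "b < 3" by auto
    then show "{a, b} \<in> {{i, (i + 1) mod 6} |i. i < 6} \<union> {{i, i + 3} |i. i < 3}"
      by blast
  qed
qed

lemma edgeE:
  assumes "e \<in> G4_edges"
  obtains a b where "e = {a,b}" "a < 6" "b < 6" "odd (a+b)"
  using assms unfolding E_char by blast

lemma edge_sub: "e \<in> G4_edges \<Longrightarrow> e \<subseteq> {..<6}"
  by (erule edgeE) auto

lemma edgeI: "a < 6 \<Longrightarrow> b < 6 \<Longrightarrow> odd (a+b) \<Longrightarrow> {a,b} \<in> G4_edges"
  unfolding E_char by blast

lemma finite_E: "finite G4_edges"
proof -
  have "G4_edges \<subseteq> Pow {..<6}" using edge_sub by blast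
  then show ?thesis by (rule finite_subset) simp
qed

definition good :: "(nat \<Rightarrow> nat) \<Rightarrow> bool" where
  "good g \<longleftrightarrow> (\<forall>v<6. g v < 6) \<and> (\<forall>a<6. \<forall>b<6. g a = g b \<longrightarrow> a = b)
     \<and> (\<forall>a<6. \<forall>b<6. odd (a+b) \<longrightarrow> odd (g a + g b))"

definition pull :: "(nat \<Rightarrow> nat) \<Rightarrow> (nat set \<Rightarrow> nat) \<Rightarrow> nat set \<Rightarrow> nat" where
  "pull g f = (\<lambda>e. if e \<in> G4_edges then f (g ` e) else 0)"

lemma good_inj: "good g \<Longrightarrow> inj_on g {..<6}"
  unfolding good_def inj_on_def lessThan_iff by blast

lemma good_edge: assumes g: "good g" and e: "e \<in> G4_edges" shows "g ` e \<in> G4_edges"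
proof -
  obtain a b where ab: "e = {a,b}" "a < 6" "b < 6" "odd (a+b)" using e by (rule edgeE)
  have "g a < 6" "g b < 6" "odd (g a + g b)" using g ab unfolding good_def by blast+
  then have "{g a, g b} \<in> G4_edges" by (rule edgeI)
  then show ?thesis using ab(1) by simp
qed

lemma good_edge_inj: "good g \<Longrightarrow> e1 \<in> G4_edges \<Longrightarrow> e2 \<in> G4_edges \<Longrightarrow> g ` e1 = g ` e2 \<Longrightarrow> e1 = e2"
  using inj_on_image_eq_iff[OF good_inj edge_sub edge_sub] by blast

lemma good_edge_surj: assumes "good g" shows "(\<lambda>e. g ` e) ` G4_edges = G4_edges"
proof -
  have inj: "inj_on (\<lambda>e. g ` e) G4_edges" using good_edge_inj[OF assms] by (auto simp: inj_on_def)
  have sub: "(\<lambda>e. g ` e) ` G4_edges \<subseteq> G4_edges" using good_edge[OF assms] by blast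
  have "card ((\<lambda>e. g ` e) ` G4_edges) = card G4_edges" using card_image[OF inj] .
  then show ?thesis using card_subset_eq[OF finite_E sub] by blast
qed

lemma good_pull_M:
  assumes g: "good g" and f: "f \<in> magic_distinct_labellings s"
  shows "pull g f \<in> magic_distinct_labellings s"
proof -
  have lab: "is_labelling (pull g f)" unfolding is_labelling_def pull_def by auto
  have finj: "inj_on f G4_edges" using f unfolding magic_distinct_labellings_def by blast
  have inj: "inj_on (pull g f) G4_edges"
  proof (rule inj_onI)
    fix x y assume xy: "x \<in> G4_edges" "y \<in> G4_edges" "pull g f x = pull g f y"
    then have "f (g ` x) = f (g ` y)" unfolding pull_def by simp
    then have "g ` x = g ` y" using finj good_edge[OF g] xy(1,2) by (meson inj_onD)
    then show "x = y" using good_edge_inj[OF g xy(1,2)] by blast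
  qed
  have magic: "magic_with_sum s (pull g f)"
    unfolding magic_with_sum_def
  proof
    fix v assume "v \<in> G4_vertices"
    then have v: "v < 6" unfolding G4_vertices_def by simp
    then have gv: "g v \<in> G4_vertices" using g unfolding good_def G4_vertices_def by simp
    have bij: "bij_betw (\<lambda>e. g ` e) {e \<in> G4_edges. v \<in> e} {e \<in> G4_edges. g v \<in> e}"
      unfolding bij_betw_def
    proof
      show "inj_on (\<lambda>e. g ` e) {e \<in> G4_edges. v \<in> e}"
        using good_edge_inj[OF g] by (auto simp: inj_on_def)
      show "(\<lambda>e. g ` e) ` {e \<in> G4_edges. v \<in> e} = {e \<in> G4_edges. g v \<in> e}"
      proof
        show "(\<lambda>e. g ` e) ` {e \<in> G4_edges. v \<in> e} \<subseteq> {e \<in> G4_edges. g v \<in> e}"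
          using good_edge[OF g] by blast
        show "{e \<in> G4_edges. g v \<in> e} \<subseteq> (\<lambda>e. g ` e) ` {e \<in> G4_edges. v \<in> e}"
        proof
          fix e' assume e': "e' \<in> {e \<in> G4_edges. g v \<in> e}"
          then obtain e where e: "e \<in> G4_edges" "e' = g ` e" using good_edge_surj[OF g] by blast
          have "g v \<in> g ` e" using e e' by simp
          moreover have "v \<in> {..<6}" using v by simp
          ultimately have "v \<in> e" using inj_on_image_mem_iff[OF good_inj[OF g] _ edge_sub[OF e(1)]] by blast
          then show "e' \<in> (\<lambda>e. g ` e) ` {e \<in> G4_edges. v \<in> e}" using e by blast
        qed
      qed
    qed
    have "(\<Sum>e\<in>{e \<in> G4_edges. v \<in> e}. pull g f e) = (\<Sum>e\<in>{e \<in> G4_edges. v \<in> e}. f (g ` e))"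
      unfolding pull_def by (rule sum.cong) auto
    also have "\<dots> = (\<Sum>e\<in>{e \<in> G4_edges. g v \<in> e}. f e)"
      by (rule sum.reindex_bij_betw[OF bij])
    also have "\<dots> = s" using f gv unfolding magic_distinct_labellings_def magic_with_sum_def by blast
    finally show "(\<Sum>e\<in>{e \<in> G4_edges. v \<in> e}. pull g f e) = s" .
  qed
  show ?thesis using lab inj magic unfolding magic_distinct_labellings_def by blast
qed

lemma pull_comp: "good b \<Longrightarrow> pull b (pull a f) = pull (\<lambda>v. a (b v)) f"
  unfolding pull_def by (auto intro!: ext simp: good_edge image_image)

lemma pull_cong: "(\<forall>v<6. c v = d v) \<Longrightarrow> pull c f = pull d f"
proof -
  assume h: "\<forall>v<6. c v = d v"
  have "e \<in> G4_edges \<Longrightarrow> c ` e = d ` e" for e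
    using edge_sub[of e] h by (auto intro!: image_cong)
  then show ?thesis unfolding pull_def by auto
qed

lemma pull_id: "is_labelling f \<Longrightarrow> (\<forall>v<6. c v = v) \<Longrightarrow> pull c f = f"
proof -
  assume f: "is_labelling f" and h: "\<forall>v<6. c v = v"
  have "e \<in> G4_edges \<Longrightarrow> c ` e = e" for e
    using edge_sub[of e] h by force
  then show ?thesis using f unfolding pull_def is_labelling_def by (auto intro!: ext)
qed

lemma vertex_from_edges:
  assumes a: "good a" and b: "good b" and h: "\<forall>e\<in>G4_edges. a ` e = b ` e" and v: "v < 6"
  shows "a v = b v"
proof -
  define w1 where "w1 = (v+1) mod 6"
  define w2 where "w2 = (v+3) mod 6"
  have facts: "\<forall>v<(6::nat). (v+1) mod 6 < 6 \<and> (v+3) mod 6 < 6 \<and> odd (v + (v+1) mod 6) \<and> odd (v + (v+3) mod 6)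
     \<and> (v+1) mod 6 \<noteq> (v+3) mod 6 \<and> v \<noteq> (v+1) mod 6 \<and> v \<noteq> (v+3) mod 6"
    by (simp only: all6) simp
  then have w: "w1 < 6" "w2 < 6" "odd (v + w1)" "odd (v + w2)" "w1 \<noteq> w2" "v \<noteq> w1" "v \<noteq> w2"
    using v unfolding w1_def w2_def by blast+
  have "a ` {v, w1} = b ` {v, w1}" using h edgeI[OF v w(1) w(3)] by blast
  then have e1: "{a v, a w1} = {b v, b w1}" by simp
  have "a ` {v, w2} = b ` {v, w2}" using h edgeI[OF v w(2) w(4)] by blast
  then have e2: "{a v, a w2} = {b v, b w2}" by simp
  have bi: "b w1 \<noteq> b w2" "b v \<noteq> b w1" using b w v unfolding good_def by blast+
  have "a v \<in> {b v, b w1}" "a v \<in> {b v, b w2}" using e1 e2 by blast+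
  then show ?thesis using bi by auto
qed

lemma pull_inj:
  assumes a: "good a" and b: "good b" and f: "f \<in> magic_distinct_labellings s"
    and eq: "pull a f = pull b f"
  shows "\<forall>v<6. a v = b v"
proof -
  have finj: "inj_on f G4_edges" using f unfolding magic_distinct_labellings_def by blast
  have "\<forall>e\<in>G4_edges. a ` e = b ` e"
  proof
    fix e assume e: "e \<in> G4_edges"
    have "f (a ` e) = f (b ` e)" using fun_cong[OF eq, of e] e unfolding pull_def by simp
    then show "a ` e = b ` e" using finj good_edge[OF a e] good_edge[OF b e] by (meson inj_onD)
  qed
  then show ?thesis using vertex_from_edges[OF a b] by blast
qed

lemma finite_M: "finite (magic_distinct_labellings s)"
proof -
  have "magic_distinct_labellings s \<subseteq> {f. \<forall>x. (x \<in> G4_edges \<longrightarrow> f x \<in> {0..s}) \<and> (x \<notin> G4_edges \<longrightarrow> f x = 0)}"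
  proof
    fix f assume f: "f \<in> magic_distinct_labellings s"
    have "f x \<le> s" if x: "x \<in> G4_edges" for x
    proof -
      obtain a b where ab: "x = {a,b}" "a < 6" "b < 6" "odd (a+b)" using x by (rule edgeE)
      have "a \<in> G4_vertices" using ab unfolding G4_vertices_def by simp
      then have "(\<Sum>e\<in>{e\<in>G4_edges. a \<in> e}. f e) = s"
        using f unfolding magic_distinct_labellings_def magic_with_sum_def by blast
      moreover have "f x \<le> (\<Sum>e\<in>{e\<in>G4_edges. a \<in> e}. f e)"
        by (rule member_le_sum) (use x ab finite_E in auto)
      ultimately show ?thesis by simp
    qed
    then show "f \<in> {f. \<forall>x. (x \<in> G4_edges \<longrightarrow> f x \<in> {0..s}) \<and> (x \<notin> G4_edges \<longrightarrow> f x = 0)}"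
      using f unfolding magic_distinct_labellings_def is_labelling_def by auto
  qed
  moreover have "finite {f. \<forall>x. (x \<in> G4_edges \<longrightarrow> f x \<in> {0..s}) \<and> (x \<notin> G4_edges \<longrightarrow> f x = (0::nat))}"
    by (rule finite_set_of_finite_funs) (simp_all add: finite_E)
  ultimately show ?thesis by (rule finite_subset)
qed

lemma count_general:
  fixes \<sigma> :: "'i \<Rightarrow> nat \<Rightarrow> nat" and I :: "'i set"
  assumes fin: "finite I" and ne: "I \<noteq> {}" and gd: "\<And>i. i \<in> I \<Longrightarrow> good (\<sigma> i)"
    and cmp: "\<And>i j. i \<in> I \<Longrightarrow> j \<in> I \<Longrightarrow> \<exists>k\<in>I. \<forall>v<6. \<sigma> k v = \<sigma> i (\<sigma> j v)"
    and inv: "\<And>i. i \<in> I \<Longrightarrow> \<exists>k\<in>I. \<forall>v<6. \<sigma> i (\<sigma> k v) = v"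
    and inj: "\<And>i j. i \<in> I \<Longrightarrow> j \<in> I \<Longrightarrow> \<forall>v<6. \<sigma> i v = \<sigma> j v \<Longrightarrow> i = j"
  shows "card (magic_distinct_labellings s)
           = card I * card ((\<lambda>f. (\<lambda>i. pull (\<sigma> i) f) ` I) ` magic_distinct_labellings s)"
proof -
  define X where "X = magic_distinct_labellings s"
  define Orb where "Orb = (\<lambda>f. (\<lambda>i. pull (\<sigma> i) f) ` I)"
  have act: "pull (\<sigma> i) f \<in> X" if "i \<in> I" "f \<in> X" for i f
    using good_pull_M[OF gd[OF that(1)]] that(2) unfolding X_def by blast
  have lab: "is_labelling f" if "f \<in> X" for f
    using that unfolding X_def magic_distinct_labellings_def by blast
  have comp: "\<exists>k\<in>I. pull (\<sigma> j) (pull (\<sigma> i) f) = pull (\<sigma> k) f" if ij: "i \<in> I" "j \<in> I" for i j f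
  proof -
    obtain k where k: "k \<in> I" "\<forall>v<6. \<sigma> k v = \<sigma> i (\<sigma> j v)" using cmp[OF ij] by blast
    have "pull (\<sigma> j) (pull (\<sigma> i) f) = pull (\<lambda>v. \<sigma> i (\<sigma> j v)) f"
      by (rule pull_comp[OF gd[OF ij(2)]])
    also have "\<dots> = pull (\<sigma> k) f" using k(2) by (intro pull_cong) simp
    finally show ?thesis using k(1) by blast
  qed
  have invr: "\<exists>k\<in>I. pull (\<sigma> k) (pull (\<sigma> i) f) = f" if iX: "i \<in> I" "f \<in> X" for i f
  proof -
    obtain k where k: "k \<in> I" "\<forall>v<6. \<sigma> i (\<sigma> k v) = v" using inv[OF iX(1)] by blast
    have "pull (\<sigma> k) (pull (\<sigma> i) f) = pull (\<lambda>v. \<sigma> i (\<sigma> k v)) f"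
      by (rule pull_comp[OF gd[OF k(1)]])
    also have "\<dots> = f" using k(2) lab[OF iX(2)] by (intro pull_id) simp_all
    finally show ?thesis using k(1) by blast
  qed
  have self: "f \<in> Orb f" if fX: "f \<in> X" for f
  proof -
    obtain i where i: "i \<in> I" using ne by blast
    obtain k where k: "k \<in> I" "pull (\<sigma> k) (pull (\<sigma> i) f) = f" using invr[OF i fX] by blast
    obtain m where m: "m \<in> I" "pull (\<sigma> k) (pull (\<sigma> i) f) = pull (\<sigma> m) f" using comp[OF i k(1)] by blast
    show ?thesis unfolding Orb_def using k m by (metis image_eqI)
  qed
  have sub: "Orb g \<subseteq> Orb f" if fg: "f \<in> X" "g \<in> Orb f" for f g
  proof
    fix h assume "h \<in> Orb g"
    then obtain j where j: "j \<in> I" "h = pull (\<sigma> j) g" unfolding Orb_def by blast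
    obtain i where i: "i \<in> I" "g = pull (\<sigma> i) f" using fg(2) unfolding Orb_def by blast
    obtain k where k: "k \<in> I" "h = pull (\<sigma> k) f" using comp[OF i(1) j(1), of f] i j by blast
    show "h \<in> Orb f" unfolding Orb_def using k by blast
  qed
  have same: "Orb g = Orb f" if fg: "f \<in> X" "g \<in> Orb f" for f g
  proof
    show "Orb g \<subseteq> Orb f" using sub[OF fg] .
    obtain i where i: "i \<in> I" "g = pull (\<sigma> i) f" using fg(2) unfolding Orb_def by blast
    have gX: "g \<in> X" using act i fg(1) by simp
    obtain k where k: "k \<in> I" "pull (\<sigma> k) g = f" using invr[OF i(1) fg(1)] i(2) by blast
    have "f \<in> Orb g" unfolding Orb_def using k by blast
    then show "Orb f \<subseteq> Orb g" using sub[OF gX] by blast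
  qed
  have cardO: "card (Orb f) = card I" if fX: "f \<in> X" for f
    unfolding Orb_def
  proof (rule card_image, rule inj_onI)
    fix i j assume ij: "i \<in> I" "j \<in> I" "pull (\<sigma> i) f = pull (\<sigma> j) f"
    have "\<forall>v<6. \<sigma> i v = \<sigma> j v"
      by (rule pull_inj[OF gd[OF ij(1)] gd[OF ij(2)] _ ij(3)]) (use fX X_def in simp)
    then show "i = j" using inj ij(1,2) by blast
  qed
  have finO: "finite (Orb f)" for f unfolding Orb_def using fin by simp
  have Xeq: "X = \<Union> (Orb ` X)"
  proof
    show "X \<subseteq> \<Union> (Orb ` X)" using self by blast
    show "\<Union> (Orb ` X) \<subseteq> X" unfolding Orb_def using act by blast
  qed
  have disj: "pairwise disjnt (Orb ` X)"
    unfolding pairwise_def disjnt_def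
  proof (intro ballI impI)
    fix A B assume AB: "A \<in> Orb ` X" "B \<in> Orb ` X" "A \<noteq> B"
    then obtain f g where fg: "f \<in> X" "g \<in> X" "A = Orb f" "B = Orb g" by blast
    show "A \<inter> B = {}"
    proof (rule ccontr)
      assume "A \<inter> B \<noteq> {}"
      then obtain h where h: "h \<in> Orb f" "h \<in> Orb g" using fg by blast
      have "Orb h = Orb f" using same[OF fg(1) h(1)] .
      moreover have "Orb h = Orb g" using same[OF fg(2) h(2)] .
      ultimately show False using AB(3) fg by simp
    qed
  qed
  have "card X = card (\<Union> (Orb ` X))" using Xeq by simp
  also have "\<dots> = sum card (Orb ` X)" by (rule card_Union_disjoint[OF disj]) (use finO in blast)
  also have "\<dots> = sum (\<lambda>_. card I) (Orb ` X)" by (rule sum.cong) (use cardO in auto)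
  also have "\<dots> = card I * card (Orb ` X)" by simp
  finally show ?thesis unfolding X_def Orb_def .
qed

definition rot :: "nat \<Rightarrow> nat \<Rightarrow> nat" where "rot k = (\<lambda>i. (k + i) mod 6)"
definition reflc :: "nat \<Rightarrow> nat \<Rightarrow> nat" where "reflc k = (\<lambda>i. (k + 6 - i mod 6) mod 6)"

lemma D6_eq: "D6 = rot ` {..<6} \<union> reflc ` {..<6}"
  unfolding D6_def rot_def reflc_def by auto

lemma D6_cases: "g \<in> D6 \<Longrightarrow> (\<exists>k<6. g = rot k) \<or> (\<exists>k<6. g = reflc k)"
  unfolding D6_eq by auto

lemma rot_good: "\<forall>k<6. good (rot k)"
  unfolding good_def rot_def by (simp only: all6) simp

lemma reflc_good: "\<forall>k<6. good (reflc k)"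
  unfolding good_def reflc_def by (simp only: all6) simp

lemma D6_good: "g \<in> D6 \<Longrightarrow> good g"
  using D6_cases rot_good reflc_good by blast

lemma rr: "\<forall>k<6. \<forall>m<6. \<forall>v<6. rot ((k+m) mod 6) v = rot k (rot m v)"
  unfolding rot_def by (simp only: all6) simp
lemma rf: "\<forall>k<6. \<forall>m<6. \<forall>v<6. reflc ((k+m) mod 6) v = rot k (reflc m v)"
  unfolding rot_def reflc_def by (simp only: all6) simp
lemma fr: "\<forall>k<6. \<forall>m<6. \<forall>v<6. reflc ((k+6-m) mod 6) v = reflc k (rot m v)"
  unfolding rot_def reflc_def by (simp only: all6) simp
lemma ff: "\<forall>k<6. \<forall>m<6. \<forall>v<6. rot ((k+6-m) mod 6) v = reflc k (reflc m v)"
  unfolding rot_def reflc_def by (simp only: all6) simp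
lemma rinv: "\<forall>k<6. \<forall>v<6. rot k (rot ((6-k) mod 6) v) = v"
  unfolding rot_def by (simp only: all6) simp
lemma finv: "\<forall>k<6. \<forall>v<6. reflc k (reflc k v) = v"
  unfolding reflc_def by (simp only: all6) simp

lemma D6_comp: "a \<in> D6 \<Longrightarrow> b \<in> D6 \<Longrightarrow> \<exists>c\<in>D6. \<forall>v<6. c v = a (b v)"
proof -
  assume a: "a \<in> D6" and b: "b \<in> D6"
  have rin: "rot (x mod 6) \<in> D6" for x unfolding D6_eq by simp
  have fin: "reflc (x mod 6) \<in> D6" for x unfolding D6_eq by simp
  show ?thesis
    using D6_cases[OF a] D6_cases[OF b]
  proof (elim disjE exE conjE)
    fix k m assume "k < 6" "a = rot k" "m < 6" "b = rot m"
    then show ?thesis using rr rin by blast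
  next
    fix k m assume "k < 6" "a = rot k" "m < 6" "b = reflc m"
    then show ?thesis using rf fin by blast
  next
    fix k m assume "k < 6" "a = reflc k" "m < 6" "b = rot m"
    then show ?thesis using fr fin by blast
  next
    fix k m assume "k < 6" "a = reflc k" "m < 6" "b = reflc m"
    then show ?thesis using ff rin by blast
  qed
qed

lemma D6_inv: "a \<in> D6 \<Longrightarrow> \<exists>c\<in>D6. \<forall>v<6. a (c v) = v"
proof -
  assume a: "a \<in> D6"
  have rin: "rot (x mod 6) \<in> D6" for x unfolding D6_eq by simp
  show ?thesis
    using D6_cases[OF a]
  proof (elim disjE exE conjE)
    fix k assume "k < 6" "a = rot k"
    then show ?thesis using rinv rin by blast
  next
    fix k assume "k < 6" "a = reflc k"
    then show ?thesis using finv a by blast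
  qed
qed

lemma D6_periodic: "g \<in> D6 \<Longrightarrow> g v = g (v mod 6)"
  using D6_cases[of g] unfolding rot_def reflc_def by (auto simp: mod_add_right_eq)

lemma D6_inj: "a \<in> D6 \<Longrightarrow> b \<in> D6 \<Longrightarrow> \<forall>v<6. a v = b v \<Longrightarrow> a = b"
proof (rule ext)
  fix x assume a: "a \<in> D6" and b: "b \<in> D6" and h: "\<forall>v<6. a v = b v"
  have "a x = a (x mod 6)" by (rule D6_periodic[OF a])
  also have "\<dots> = b (x mod 6)" using h by simp
  also have "\<dots> = b x" by (rule D6_periodic[OF b, symmetric])
  finally show "a x = b x" .
qed

lemma card_D6: "card D6 = 12"
proof -
  have i1: "inj_on rot {..<6}"
  proof (rule inj_onI)
    fix x y assume "x \<in> {..<6::nat}" "y \<in> {..<6}" "rot x = rot y"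
    then show "x = y" using fun_cong[of "rot x" "rot y" 0] unfolding rot_def by simp
  qed
  have i2: "inj_on reflc {..<6}"
  proof (rule inj_onI)
    fix x y assume "x \<in> {..<6::nat}" "y \<in> {..<6}" "reflc x = reflc y"
    then show "x = y" using fun_cong[of "reflc x" "reflc y" 0] unfolding reflc_def by simp
  qed
  have dd: "\<forall>a<6. \<forall>b<6. \<not> (rot a 0 = reflc b 0 \<and> rot a 1 = reflc b 1)"
    unfolding rot_def reflc_def by (simp only: all6) simp
  have disj: "rot ` {..<6} \<inter> reflc ` {..<6} = {}"
  proof (rule ccontr)
    assume "rot ` {..<6} \<inter> reflc ` {..<6} \<noteq> {}"
    then obtain a b where "a < 6" "b < 6" "rot a = reflc b" by auto
    then show False using dd by metis
  qed
  have "card D6 = card (rot ` {..<6}) + card (reflc ` {..<6})"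
    unfolding D6_eq by (rule card_Un_disjoint) (simp_all add: disj)
  also have "\<dots> = 12" using card_image[OF i1] card_image[OF i2] by simp
  finally show ?thesis .
qed

lemma D6_orbit_eq:
  assumes f: "is_labelling f"
  shows "D6_orbit f = (\<lambda>g. pull g f) ` D6"
proof
  show "D6_orbit f \<subseteq> (\<lambda>g. pull g f) ` D6"
  proof
    fix f' assume "f' \<in> D6_orbit f"
    then obtain g where g: "g \<in> D6" "is_labelling f'" "\<forall>e\<in>G4_edges. f' (g ` e) = f e"
      unfolding D6_orbit_def by blast
    obtain h where h: "h \<in> D6" "\<forall>v<6. g (h v) = v" using D6_inv[OF g(1)] by blast
    have "f' = pull h f"
    proof
      fix e show "f' e = pull h f e"
      proof (cases "e \<in> G4_edges")
        case True
        have he: "h ` e \<in> G4_edges" using good_edge[OF D6_good[OF h(1)] True] .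
        have "g ` (h ` e) = e" using h(2) edge_sub[OF True] by (force simp: image_image)
        then show ?thesis using g(3) he True unfolding pull_def by metis
      next
        case False then show ?thesis using g(2) unfolding pull_def is_labelling_def by simp
      qed
    qed
    then show "f' \<in> (\<lambda>g. pull g f) ` D6" using h(1) by blast
  qed
  show "(\<lambda>g. pull g f) ` D6 \<subseteq> D6_orbit f"
  proof
    fix f' assume "f' \<in> (\<lambda>g. pull g f) ` D6"
    then obtain g where g: "g \<in> D6" "f' = pull g f" by blast
    obtain h where h: "h \<in> D6" "\<forall>v<6. g (h v) = v" using D6_inv[OF g(1)] by blast
    have "\<forall>e\<in>G4_edges. f' (h ` e) = f e"
    proof
      fix e assume e: "e \<in> G4_edges"
      have he: "h ` e \<in> G4_edges" using good_edge[OF D6_good[OF h(1)] e] .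
      have "g ` (h ` e) = e" using h(2) edge_sub[OF e] by (force simp: image_image)
      then show "f' (h ` e) = f e" using he unfolding g(2) pull_def by simp
    qed
    moreover have "is_labelling f'" unfolding g(2) pull_def is_labelling_def by simp
    ultimately show "f' \<in> D6_orbit f" unfolding D6_orbit_def using h(1) by blast
  qed
qed

lemma D6_count: "card (magic_distinct_labellings s) = 12 * h_tilde s"
proof -
  have "card (magic_distinct_labellings s) = card D6 * card ((\<lambda>f. (\<lambda>i. pull i f) ` D6) ` magic_distinct_labellings s)"
    by (rule count_general[where \<sigma> = "\<lambda>g. g"])
       (use D6_good D6_comp D6_inv D6_inj card_D6 in \<open>auto simp: card_ge_0_finite\<close>)
  also have "(\<lambda>f. (\<lambda>i. pull i f) ` D6) ` magic_distinct_labellings s = D6_orbit ` magic_distinct_labellings s"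
    by (rule image_cong) (auto simp: D6_orbit_eq magic_distinct_labellings_def)
  finally show ?thesis unfolding h_tilde_def card_D6 .
qed

definition L3 :: "nat list set" where
  "L3 = {[0,1,2],[0,2,1],[1,0,2],[1,2,0],[2,0,1],[2,1,0]}"

fun aut :: "nat list \<times> nat list \<times> bool \<Rightarrow> nat \<Rightarrow> nat" where
  "aut (l1, l2, t) v = (if t then (if even v then 2 * (l2 ! (v div 2)) + 1 else 2 * (l1 ! (v div 2)))
                         else (if even v then 2 * (l1 ! (v div 2)) else 2 * (l2 ! (v div 2)) + 1))"

definition IA :: "(nat list \<times> nat list \<times> bool) set" where
  "IA = L3 \<times> L3 \<times> UNIV"

lemma card_L3: "card L3 = 6" unfolding L3_def by simp
lemma card_IA: "card IA = 72" unfolding IA_def by (simp add: card_cartesian_product card_L3)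

lemma L3_props: "l \<in> L3 \<Longrightarrow> length l = 3 \<and> (\<forall>x<3. l ! x < 3) \<and> (\<forall>x<3. \<forall>y<3. l ! x = l ! y \<longrightarrow> x = y)"
  unfolding L3_def by (simp only: all3 insert_iff empty_iff) auto

lemma L3_comp: "l \<in> L3 \<Longrightarrow> m \<in> L3 \<Longrightarrow> map (\<lambda>x. l ! x) m \<in> L3"
  unfolding L3_def by (simp only: insert_iff empty_iff) (elim disjE; simp)

lemma L3_inv: "l \<in> L3 \<Longrightarrow> \<exists>m\<in>L3. \<forall>x<3. l ! (m ! x) = x"
  unfolding L3_def by (simp only: insert_iff empty_iff) (elim disjE; simp add: all3)

lemma L3_eq: "l \<in> L3 \<Longrightarrow> l = [l!0, l!1, l!2]"
  unfolding L3_def by auto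

lemma aut_good: assumes "l1 \<in> L3" "l2 \<in> L3" shows "good (aut (l1, l2, t))"
proof -
  have p1: "\<forall>x<3. l1 ! x < 3" "\<forall>x<3. \<forall>y<3. l1 ! x = l1 ! y \<longrightarrow> x = y" using L3_props[OF assms(1)] by blast+
  have p2: "\<forall>x<3. l2 ! x < 3" "\<forall>x<3. \<forall>y<3. l2 ! x = l2 ! y \<longrightarrow> x = y" using L3_props[OF assms(2)] by blast+
  have a0: "l1!0 < 3" "l1!1 < 3" "l1!2 < 3" "l2!0 < 3" "l2!1 < 3" "l2!2 < 3" using p1 p2 by simp_all
  have a1: "l1!0 \<noteq> l1!1" "l1!0 \<noteq> l1!2" "l1!1 \<noteq> l1!2" "l2!0 \<noteq> l2!1" "l2!0 \<noteq> l2!2" "l2!1 \<noteq> l2!2"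
    using p1(2) p2(2) unfolding all3 by auto
  have oe: "Suc (2*a) \<noteq> 2*b" "2*b \<noteq> Suc (2*a)" for a b :: nat by presburger+
  have a2: "2*(l2!0) < 5" "2*(l2!1) < 5" "2*(l2!2) < 5" using a0 by simp_all
  note a0' = a0[unfolded One_nat_def] and a2' = a2[unfolded One_nat_def] and a1' = a1[unfolded One_nat_def]
  show ?thesis unfolding good_def
    by (simp only: all6) (cases t; simp add: a0 a1 a1[symmetric] a0' a1' a1'[symmetric] oe a2 a2')
qed

lemma L3_len: "l \<in> L3 \<Longrightarrow> length l = 3" using L3_props by blast

lemma aut_comp:
  assumes i: "i \<in> IA" and j: "j \<in> IA"
  shows "\<exists>k\<in>IA. \<forall>v<6. aut k v = aut i (aut j v)"
proof -
  obtain l1 l2 t where it: "i = (l1, l2, t)" "l1 \<in> L3" "l2 \<in> L3" using i unfolding IA_def by auto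
  obtain m1 m2 t' where jt: "j = (m1, m2, t')" "m1 \<in> L3" "m2 \<in> L3" using j unfolding IA_def by auto
  have len: "length m1 = 3" "length m2 = 3" using jt L3_len by auto
  define c where "c = (\<lambda>l m. map (\<lambda>x. (l::nat list) ! x) (m::nat list))"
  have cin: "c l m \<in> L3" if "l \<in> L3" "m \<in> L3" for l m unfolding c_def using L3_comp that by blast
  have oe: "Suc (2*a) div 2 = a" for a :: nat by presburger
  show ?thesis
  proof (cases t; cases t')
    assume "t" "t'"
    then show ?thesis using it jt len
      by (intro bexI[of _ "(c l1 m2, c l2 m1, False)"]) (simp_all only: all6, simp_all add: c_def IA_def L3_comp oe)
  next
    assume "t" "\<not> t'"
    then show ?thesis using it jt len
      by (intro bexI[of _ "(c l1 m2, c l2 m1, True)"]) (simp_all only: all6, simp_all add: c_def IA_def L3_comp oe)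
  next
    assume "\<not> t" "t'"
    then show ?thesis using it jt len
      by (intro bexI[of _ "(c l1 m1, c l2 m2, True)"]) (simp_all only: all6, simp_all add: c_def IA_def L3_comp oe)
  next
    assume "\<not> t" "\<not> t'"
    then show ?thesis using it jt len
      by (intro bexI[of _ "(c l1 m1, c l2 m2, False)"]) (simp_all only: all6, simp_all add: c_def IA_def L3_comp oe)
  qed
qed

lemma aut_inv:
  assumes i: "i \<in> IA"
  shows "\<exists>k\<in>IA. \<forall>v<6. aut i (aut k v) = v"
proof -
  obtain l1 l2 t where it: "i = (l1, l2, t)" "l1 \<in> L3" "l2 \<in> L3" using i unfolding IA_def by auto
  obtain n1 where n1: "n1 \<in> L3" "\<forall>x<3. l1 ! (n1 ! x) = x" using L3_inv[OF it(2)] by blast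
  obtain n2 where n2: "n2 \<in> L3" "\<forall>x<3. l2 ! (n2 ! x) = x" using L3_inv[OF it(3)] by blast
  have e1: "l1 ! (n1 ! 0) = 0" "l1 ! (n1 ! 1) = 1" "l1 ! (n1 ! 2) = 2" using n1(2) unfolding all3 by blast+
  have e2: "l2 ! (n2 ! 0) = 0" "l2 ! (n2 ! 1) = 1" "l2 ! (n2 ! 2) = 2" using n2(2) unfolding all3 by blast+
  note e1' = e1[unfolded One_nat_def] and e2' = e2[unfolded One_nat_def]
  have oe: "Suc (2*a) div 2 = a" for a :: nat by presburger
  show ?thesis
  proof (cases t)
    case True
    then show ?thesis using it n1(1) n2(1)
      by (intro bexI[of _ "(n2, n1, True)"]) (simp_all only: all6, simp_all add: IA_def oe e1 e2 e1' e2')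
  next
    case False
    then show ?thesis using it n1(1) n2(1)
      by (intro bexI[of _ "(n1, n2, False)"]) (simp_all only: all6, simp_all add: IA_def oe e1 e2 e1' e2')
  qed
qed

lemma aut_inj:
  assumes i: "i \<in> IA" and j: "j \<in> IA" and h: "\<forall>v<6. aut i v = aut j v"
  shows "i = j"
proof -
  obtain l1 l2 t where it: "i = (l1, l2, t)" "l1 \<in> L3" "l2 \<in> L3" using i unfolding IA_def by auto
  obtain m1 m2 t' where jt: "j = (m1, m2, t')" "m1 \<in> L3" "m2 \<in> L3" using j unfolding IA_def by auto
  have oe: "Suc (2*a) \<noteq> 2*b" for a b :: nat by presburger
  have h6: "aut i 0 = aut j 0" "aut i 1 = aut j 1" "aut i 2 = aut j 2" "aut i 3 = aut j 3"
     "aut i 4 = aut j 4" "aut i 5 = aut j 5" using h unfolding all6 by blast+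
  have a0: "aut i 0 = (if t then Suc (2*(l2!0)) else 2*(l1!0))" "aut j 0 = (if t' then Suc (2*(m2!0)) else 2*(m1!0))"
    unfolding it jt by simp_all
  have tt: "t = t'"
  proof (rule ccontr)
    assume ne: "t \<noteq> t'"
    show False
    proof (cases t)
      case True
      then have "Suc (2*(l2!0)) = 2*(m1!0)" using ne h6(1) a0 by simp
      then show False using oe by blast
    next
      case False
      then have "2*(l1!0) = Suc (2*(m2!0))" using ne h6(1) a0 by simp
      then show False using oe by metis
    qed
  qed
  have "l1 ! 0 = m1 ! 0 \<and> l1 ! 1 = m1 ! 1 \<and> l1 ! 2 = m1 ! 2 \<and> l2 ! 0 = m2 ! 0 \<and> l2 ! 1 = m2 ! 1 \<and> l2 ! 2 = m2 ! 2"
  proof (cases t')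
    case True
    then show ?thesis using h6 unfolding it jt tt by simp
  next
    case False
    then show ?thesis using h6 unfolding it jt tt by simp
  qed
  moreover have "l1 = [l1!0, l1!1, l1!2]" "l2 = [l2!0, l2!1, l2!2]" "m1 = [m1!0, m1!1, m1!2]" "m2 = [m2!0, m2!1, m2!2]"
    using L3_eq it jt by blast+
  ultimately have "l1 = m1" "l2 = m2" by simp_all
  then show ?thesis using it jt tt by simp
qed

lemma Aut_count: "card (magic_distinct_labellings s) = 72 * card ((\<lambda>f. (\<lambda>i. pull (aut i) f) ` IA) ` magic_distinct_labellings s)"
proof -
  have fin: "finite IA" unfolding IA_def L3_def by simp
  have ne: "IA \<noteq> {}" unfolding IA_def L3_def by simp
  have gd: "good (aut i)" if "i \<in> IA" for i
    using that aut_good unfolding IA_def by auto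
  have "card (magic_distinct_labellings s) = card IA * card ((\<lambda>f. (\<lambda>i. pull (aut i) f) ` IA) ` magic_distinct_labellings s)"
    by (rule count_general[of IA aut, OF fin ne gd aut_comp aut_inv aut_inj])
  then show ?thesis unfolding card_IA .
qed

theorem mainTheorem8:
  fixes s :: nat
  shows "6 dvd h_tilde s"
proof -
  define m where "m = card ((\<lambda>f. (\<lambda>i. pull (aut i) f) ` IA) ` magic_distinct_labellings s)"
  have "12 * h_tilde s = 72 * m"
    using D6_count Aut_count unfolding m_def by metis
  then have "h_tilde s = 6 * m" by linarith
  then show ?thesis by simp
qed

end
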